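(* Let $S=(X,\prec,\sqsubset)$ be an so-structure and $\alpha,\beta\in X$. Then ($\alpha\lhd\beta$ or $\beta\lhd\alpha$ for every $\lhd\in ext(S)$) if and only if ($\alpha\prec\beta$ or $\beta\prec\alpha$).
   Context: A stratified order structure (so-structure) is a triple $S=(X,\prec,\sqsubset)$ with $\prec,\sqsubset\subseteq X\times X$ such that for all $\alpha,\beta,\gamma\in X$: (S1) $\neg(\alpha\sqsubset\alpha)$; (S2) $\alpha\prec\beta\Rightarrow\alpha\sqsubset\beta$; (S3) $\alpha\sqsubset\beta\sqsubset\gamma\wedge\alpha\neq\gamma\Rightarrow\alpha\sqsubset\gamma$; (S4) $(\alpha\sqsubset\beta\wedge\beta\prec\gamma)\vee(\alpha\prec\beta\wedge\beta\sqsubset\gamma)\Rightarrow\alpha\prec\gamma$. For a relation $\lhd$ on $X$: $\alpha\frown_\lhd\beta$ iff $\alpha\neq\beta$, $\neg(\alpha\lhd\beta)$ and $\neg(\beta\lhd\alpha)$; $\lhd^\frown:=\lhd\cup\frown_\lhd$. A partial order $\lhd$ is stratified if $\frown_\lhd\cup\mathrm{id}_X$ is an equivalence relation. A stratified extension of $S$ is a stratified order $\lhd$ on $X$ with $\prec\subseteq\lhd$ and $\sqsubset\subseteq\lhd^\frown$; $ext(S)$ is the set of all stratified extensions of $S$. *)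

theory Defs
  imports Main
begin

definition so_structure :: "'a set \<Rightarrow> ('a \<times> 'a) set \<Rightarrow> ('a \<times> 'a) set \<Rightarrow> bool" where
  "so_structure X prec sqsub \<longleftrightarrow>
     prec \<subseteq> X \<times> X \<and> sqsub \<subseteq> X \<times> X \<and>
     (\<forall>a\<in>X. (a, a) \<notin> sqsub) \<and>
     (\<forall>a\<in>X. \<forall>b\<in>X. (a, b) \<in> prec \<longrightarrow> (a, b) \<in> sqsub) \<and>
     (\<forall>a\<in>X. \<forall>b\<in>X. \<forall>c\<in>X. (a, b) \<in> sqsub \<and> (b, c) \<in> sqsub \<and> a \<noteq> c \<longrightarrow> (a, c) \<in> sqsub) \<and>
     (\<forall>a\<in>X. \<forall>b\<in>X. \<forall>c\<in>X.
        ((a, b) \<in> sqsub \<and> (b, c) \<in> prec) \<or> ((a, b) \<in> prec \<and> (b, c) \<in> sqsub) \<longrightarrow> (a, c) \<in> prec)"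

definition incomp :: "'a set \<Rightarrow> ('a \<times> 'a) set \<Rightarrow> ('a \<times> 'a) set" where
  "incomp X R = {(a, b). a \<in> X \<and> b \<in> X \<and> a \<noteq> b \<and> (a, b) \<notin> R \<and> (b, a) \<notin> R}"

definition frown_closure :: "'a set \<Rightarrow> ('a \<times> 'a) set \<Rightarrow> ('a \<times> 'a) set" where
  "frown_closure X R = R \<union> incomp X R"

definition partial_order_on_X :: "'a set \<Rightarrow> ('a \<times> 'a) set \<Rightarrow> bool" where
  "partial_order_on_X X R \<longleftrightarrow> R \<subseteq> X \<times> X \<and> irrefl R \<and> trans R"

definition stratified_order :: "'a set \<Rightarrow> ('a \<times> 'a) set \<Rightarrow> bool" where
  "stratified_order X R \<longleftrightarrow> partial_order_on_X X R \<and> equiv X (incomp X R \<union> Id_on X)"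

definition ext :: "'a set \<Rightarrow> ('a \<times> 'a) set \<Rightarrow> ('a \<times> 'a) set \<Rightarrow> ('a \<times> 'a) set set" where
  "ext X prec sqsub = {R. stratified_order X R \<and> prec \<subseteq> R \<and> sqsub \<subseteq> frown_closure X R}"

end

theory Submission
  imports Defs
begin

lemma zorn_total:
  assumes r: "refl_on X T0" and t: "trans T0" and s: "T0 \<subseteq> X \<times> X"
    and pT: "P \<subseteq> T0" and np: "\<forall>(p,q)\<in>P. (q,p)\<notin>T0"
  shows "\<exists>M. T0 \<subseteq> M \<and> M \<subseteq> X \<times> X \<and> trans M \<and> total_on X M \<and> (\<forall>(p,q)\<in>P. (q,p)\<notin>M)"
proof -
  define A where "A = {T. T0 \<subseteq> T \<and> T \<subseteq> X \<times> X \<and> trans T \<and> (\<forall>(p,q)\<in>P. (q,p)\<notin>T)}"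
  have "\<forall>C\<in>chains A. \<exists>U\<in>A. \<forall>Y\<in>C. Y \<subseteq> U"
  proof
    fix C assume C: "C \<in> chains A"
    show "\<exists>U\<in>A. \<forall>Y\<in>C. Y \<subseteq> U"
    proof (cases "C = {}")
      case True
      then show ?thesis using assms unfolding A_def by auto
    next
      case False
      have sub: "C \<subseteq> A" using C chainsD2 by blast
      have "\<Union>C \<in> A"
        unfolding A_def
      proof (intro CollectI conjI)
        show "T0 \<subseteq> \<Union>C" using False sub unfolding A_def by blast
        show "\<Union>C \<subseteq> X \<times> X" using sub unfolding A_def by blast
        show "\<forall>(p,q)\<in>P. (q,p)\<notin>\<Union>C" using sub unfolding A_def by blast
        show "trans (\<Union>C)"
        proof (rule transI)
          fix x y z assume "(x,y) \<in> \<Union>C" "(y,z) \<in> \<Union>C"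
          then obtain Y1 Y2 where "Y1 \<in> C" "Y2 \<in> C" "(x,y)\<in>Y1" "(y,z)\<in>Y2" by blast
          moreover have "Y1 \<subseteq> Y2 \<or> Y2 \<subseteq> Y1" using chainsD[OF C] calculation by blast
          moreover have "trans Y1" "trans Y2" using calculation sub unfolding A_def by auto
          ultimately show "(x,z) \<in> \<Union>C" by (meson UnionI subsetD transD)
        qed
      qed
      then show ?thesis by blast
    qed
  qed
  then obtain M where M: "M \<in> A" and mx: "\<forall>Y\<in>A. M \<subseteq> Y \<longrightarrow> Y = M"
    using Zorn_Lemma2 by blast
  have MA: "T0 \<subseteq> M" "M \<subseteq> X \<times> X" "trans M" "\<forall>(p,q)\<in>P. (q,p)\<notin>M"
    using M unfolding A_def by auto
  have reflM: "\<And>x. x \<in> X \<Longrightarrow> (x,x) \<in> M" using r MA(1) unfolding refl_on_def by blast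
  have "total_on X M"
  proof (rule total_onI)
    fix x y assume xy: "x \<in> X" "y \<in> X" "x \<noteq> y"
    show "(x,y) \<in> M \<or> (y,x) \<in> M"
    proof (rule ccontr)
      assume nn: "\<not> ((x,y) \<in> M \<or> (y,x) \<in> M)"
      define M' where "M' = M \<union> {(u,v). (u,x)\<in>M \<and> (y,v)\<in>M}"
      have "M' \<in> A" unfolding A_def
      proof (intro CollectI conjI)
        show "T0 \<subseteq> M'" using MA unfolding M'_def by blast
        show "M' \<subseteq> X \<times> X" using MA unfolding M'_def by blast
        show "trans M'"
        proof (rule transI)
          fix u v w assume a1: "(u,v) \<in> M'" and a2: "(v,w) \<in> M'"
          show "(u,w) \<in> M'"
            using a1 a2 MA(3) nn unfolding M'_def by (auto dest: transD)
        qed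
        show "\<forall>(p,q)\<in>P. (q,p)\<notin>M'"
        proof (clarify)
          fix p q assume pq: "(p,q) \<in> P" "(q,p) \<in> M'"
          have "(p,q) \<in> M" using pq pT MA(1) by blast
          then show False using pq MA(3,4) nn unfolding M'_def by (auto dest: transD)
        qed
      qed
      moreover have "M \<subseteq> M'" unfolding M'_def by blast
      ultimately have "M' = M" using mx by blast
      moreover have "(x,y) \<in> M'" unfolding M'_def using reflM xy by blast
      ultimately show False using nn by blast
    qed
  qed
  then show ?thesis using MA by blast
qed

theorem mainTheorem3:
  assumes "so_structure X prec sqsub"
    and "a \<in> X" and "b \<in> X"
  shows "(\<forall>R\<in>ext X prec sqsub. (a, b) \<in> R \<or> (b, a) \<in> R)
         \<longleftrightarrow> ((a, b) \<in> prec \<or> (b, a) \<in> prec)"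
proof
  assume "(a, b) \<in> prec \<or> (b, a) \<in> prec"
  then show "\<forall>R\<in>ext X prec sqsub. (a, b) \<in> R \<or> (b, a) \<in> R"
    unfolding ext_def by blast
next
  assume H: "\<forall>R\<in>ext X prec sqsub. (a, b) \<in> R \<or> (b, a) \<in> R"
  show "(a, b) \<in> prec \<or> (b, a) \<in> prec"
  proof (rule ccontr)
    assume N: "\<not> ((a, b) \<in> prec \<or> (b, a) \<in> prec)"
    note so = assms(1)[unfolded so_structure_def]
    have precX: "prec \<subseteq> X \<times> X" and sqX: "sqsub \<subseteq> X \<times> X" using so by auto
    have irr: "\<And>x. (x,x) \<notin> sqsub" using so sqX by blast
    have ps: "\<And>x y. (x,y) \<in> prec \<Longrightarrow> (x,y) \<in> sqsub" using so precX by blast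
    have s3: "\<And>x y z. (x,y) \<in> sqsub \<Longrightarrow> (y,z) \<in> sqsub \<Longrightarrow> x \<noteq> z \<Longrightarrow> (x,z) \<in> sqsub"
      using so sqX by blast
    have s4a: "\<And>x y z. (x,y) \<in> sqsub \<Longrightarrow> (y,z) \<in> prec \<Longrightarrow> (x,z) \<in> prec"
      using so sqX precX by blast
    have s4b: "\<And>x y z. (x,y) \<in> prec \<Longrightarrow> (y,z) \<in> sqsub \<Longrightarrow> (x,z) \<in> prec"
      using so sqX precX by blast
    define S where "S = sqsub \<union> Id_on X"
    have transS: "trans S"
      unfolding S_def by (rule transI) (use s3 sqX in auto)
    have SX: "S \<subseteq> X \<times> X" unfolding S_def using sqX by auto
    have S4a: "\<And>x y z. (x,y) \<in> S \<Longrightarrow> (y,z) \<in> prec \<Longrightarrow> (x,z) \<in> prec"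
      unfolding S_def using s4a by auto
    have S4b: "\<And>x y z. (x,y) \<in> prec \<Longrightarrow> (y,z) \<in> S \<Longrightarrow> (x,z) \<in> prec"
      unfolding S_def using s4b by auto
    define E where "E = {(a,b),(b,a)}"
    define T0 where "T0 = S \<union> S O E O S"
    have T0X: "T0 \<subseteq> X \<times> X" unfolding T0_def E_def using SX assms(2,3) by blast
    have reflT0: "refl_on X T0" unfolding refl_on_def T0_def S_def using T0X by auto
    have EE: "E O S O E \<subseteq> Id_on X \<union> E" unfolding E_def using assms(2,3) by auto
    have SS: "S O S \<subseteq> S" using transS unfolding trans_def by blast
    have IS: "Id_on X O S \<subseteq> S" using SX by auto
    have transT0: "trans T0"
    proof -
      have "T0 O T0 \<subseteq> T0"
      proof -
        have "T0 O T0 = S O S \<union> (S O S) O E O S \<union> S O E O (S O S) \<union> S O (E O (S O S) O E) O S"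
          unfolding T0_def by (simp add: relcomp_distrib relcomp_distrib2 O_assoc Un_ac)
        also have "\<dots> \<subseteq> S \<union> S O E O S \<union> S O E O S \<union> S O (Id_on X \<union> E) O S"
          using SS EE relcomp_mono[OF relcomp_mono[OF order_refl SS] order_refl, of E E] by blast
        also have "\<dots> \<subseteq> T0" unfolding T0_def using SS IS by blast
        finally show ?thesis .
      qed
      then show ?thesis unfolding trans_def by blast
    qed
    have pT0: "prec \<subseteq> T0" unfolding T0_def S_def using ps by auto
    have npT0: "\<forall>(p,q)\<in>prec. (q,p)\<notin>T0"
    proof clarify
      fix p q assume pq: "(p,q) \<in> prec" "(q,p) \<in> T0"
      show False
      proof (cases "(q,p) \<in> S")
        case True
        then have "(p,p) \<in> prec" using S4b pq by blast
        then show False using ps irr by blast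
      next
        case False
        then obtain x y where "(q,x) \<in> S" "(x,y) \<in> E" "(y,p) \<in> S"
          using pq unfolding T0_def by blast
        then have "(y,x) \<in> prec" using S4a S4b pq(1) by blast
        moreover have "(y,x) \<in> E" using \<open>(x,y) \<in> E\<close> unfolding E_def by auto
        ultimately show False using N unfolding E_def by auto
      qed
    qed
    obtain M where M: "T0 \<subseteq> M" "M \<subseteq> X \<times> X" "trans M" "total_on X M"
      "\<forall>(p,q)\<in>prec. (q,p)\<notin>M"
      using zorn_total[OF reflT0 transT0 T0X pT0 npT0] by blast
    have reflM: "\<And>x. x \<in> X \<Longrightarrow> (x,x) \<in> M" using reflT0 M(1) unfolding refl_on_def by blast
    have tot: "\<And>x y. x \<in> X \<Longrightarrow> y \<in> X \<Longrightarrow> (x,y) \<in> M \<or> (y,x) \<in> M"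
      using M(4) reflM unfolding total_on_def by metis
    define R where "R = {(x,y). x \<in> X \<and> y \<in> X \<and> (y,x) \<notin> M}"
    have inc: "incomp X R = {(x,y). x \<in> X \<and> y \<in> X \<and> x \<noteq> y \<and> (x,y) \<in> M \<and> (y,x) \<in> M}"
      unfolding incomp_def R_def by auto
    have eqv: "incomp X R \<union> Id_on X = {(x,y). x \<in> X \<and> y \<in> X \<and> (x,y) \<in> M \<and> (y,x) \<in> M}"
      unfolding inc using reflM by auto
    have "R \<in> ext X prec sqsub"
      unfolding ext_def
    proof (intro CollectI conjI)
      show "prec \<subseteq> R" unfolding R_def using M(5) precX by blast
      show "sqsub \<subseteq> frown_closure X R"
      proof
        fix z assume z: "z \<in> sqsub"
        then obtain x y where zz: "z = (x,y)" by (cases z)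
        have "(x,y) \<in> T0" unfolding T0_def S_def using z zz by blast
        then have "(x,y) \<in> M" using M(1) by blast
        moreover have "x \<noteq> y" using irr z zz by blast
        moreover have "x \<in> X" "y \<in> X" using z zz sqX by auto
        ultimately have "(x,y) \<in> R \<or> (x,y) \<in> incomp X R"
          unfolding inc by (simp add: R_def)
        then show "z \<in> frown_closure X R"
          unfolding frown_closure_def zz by blast
      qed
      show "stratified_order X R"
        unfolding stratified_order_def partial_order_on_X_def
      proof (intro conjI)
        show "R \<subseteq> X \<times> X" unfolding R_def by auto
        show "irrefl R" unfolding irrefl_def R_def using reflM by auto
        show "trans R"
        proof (rule transI)
          fix x y z assume "(x,y) \<in> R" "(y,z) \<in> R"
          then have h: "x \<in> X" "y \<in> X" "z \<in> X" "(y,x) \<notin> M" "(z,y) \<notin> M"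
            unfolding R_def by auto
          then have "(x,y) \<in> M" using tot by blast
          then have "(z,x) \<notin> M" using h M(3) by (meson transD)
          then show "(x,z) \<in> R" unfolding R_def using h by simp
        qed
        show "equiv X (incomp X R \<union> Id_on X)"
          unfolding eqv equiv_def
        proof (intro conjI)
          show "refl_on X {(x, y). x \<in> X \<and> y \<in> X \<and> (x, y) \<in> M \<and> (y, x) \<in> M}"
            unfolding refl_on_def using reflM by blast
          show "{(x, y). x \<in> X \<and> y \<in> X \<and> (x, y) \<in> M \<and> (y, x) \<in> M} \<subseteq> X \<times> X"
            by blast
          show "sym {(x, y). x \<in> X \<and> y \<in> X \<and> (x, y) \<in> M \<and> (y, x) \<in> M}"
            unfolding sym_def by blast
          show "trans {(x, y). x \<in> X \<and> y \<in> X \<and> (x, y) \<in> M \<and> (y, x) \<in> M}"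
            using M(3) unfolding trans_def by blast
        qed
      qed
    qed
    moreover have "(a,b) \<in> M" "(b,a) \<in> M" using M(1) unfolding T0_def E_def S_def
      using assms(2,3) by blast+
    ultimately have "(a,b) \<in> R \<or> (b,a) \<in> R" using H by blast
    then show False using \<open>(a,b) \<in> M\<close> \<open>(b,a) \<in> M\<close> unfolding R_def by blast
  qed
qed

end
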